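(* There is $\varepsilon_0>0$ such that for every fixed $\varepsilon\in(0,\varepsilon_0)$ the following holds. Let $p=p(n)$ satisfy $(1-\varepsilon)\log n\le np\le \log n+\log\log n$, and let $G\sim G(n,p)$. For integers $k\ge 0$ let $X_k$ be the number of vertices of degree $k$ in $G$ and $n_k=n\binom{n-1}{k}p^k(1-p)^{n-k-1}$. Let $K_0=K_0(n)\in\{0,1,2\}$ be any choice with $n_{K_0}\to\infty$, and $K_1=\lfloor \log n/10^3\rfloor$. Then a.a.s., for every integer $k\in[K_0,K_1]$, $|X_k-n_k|\le n_k/\log n_k$.
   Context: $G(n,p)$ is the binomial random graph; $\log$ is the natural logarithm; a.a.s. means with probability tending to $1$ as $n\to\infty$. *)

theory Defs
  imports "HOL-Probability.Probability"
begin

text \<open>Binomial random graph G(n,p) on vertex set {0..<n}: a graph is an indicator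
  function on 2-element vertex sets; each of the potential edges is present
  independently with probability p.\<close>

definition pairs :: "nat \<Rightarrow> nat set set" where
  "pairs n = {{i, j} | i j. i < j \<and> j < n}"

definition Gnp :: "nat \<Rightarrow> real \<Rightarrow> (nat set \<Rightarrow> bool) pmf" where
  "Gnp n p = Pi_pmf (pairs n) False (\<lambda>_. bernoulli_pmf p)"

definition degree :: "nat \<Rightarrow> (nat set \<Rightarrow> bool) \<Rightarrow> nat \<Rightarrow> nat" where
  "degree n G v = card {u. u < n \<and> u \<noteq> v \<and> G {u, v}}"

definition num_deg :: "nat \<Rightarrow> (nat set \<Rightarrow> bool) \<Rightarrow> nat \<Rightarrow> nat" where
  "num_deg n G k = card {v. v < n \<and> degree n G v = k}"

definition expdeg :: "nat \<Rightarrow> real \<Rightarrow> nat \<Rightarrow> real" where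
  "expdeg n p k = real n * real ((n - 1) choose k) * p ^ k * (1 - p) ^ (n - k - 1)"

end

theory Submission
  imports Defs "HOL-Real_Asymp.Real_Asymp"
begin

definition cnt :: "nat set set \<Rightarrow> (nat set \<Rightarrow> bool) \<Rightarrow> nat" where
  "cnt S G = card {e\<in>S. G e}"

lemma map_Pi_restrict:
  fixes B :: "nat set \<Rightarrow> bool pmf"
  assumes "finite I" "J \<subseteq> I" "\<And>G. f G = f (\<lambda>x. if x \<in> J then G x else False)"
  shows "map_pmf f (Pi_pmf I False B) = map_pmf f (Pi_pmf J False B)"
proof -
  have "map_pmf f (Pi_pmf J False B) = map_pmf f (map_pmf (\<lambda>G x. if x \<in> J then G x else False) (Pi_pmf I False B))"
    by (rule arg_cong[where f="map_pmf f"], rule Pi_pmf_subset[OF assms(1,2)])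
  also have "\<dots> = map_pmf f (Pi_pmf I False B)"
    by (simp add: pmf.map_comp o_def assms(3)[symmetric])
  finally show ?thesis ..
qed

lemma cnt_restrict: "S \<subseteq> J \<Longrightarrow> cnt S (\<lambda>x. if x \<in> J then G x else False) = cnt S G"
  unfolding cnt_def by (rule arg_cong[where f=card]) auto

lemma map_cnt:
  assumes "finite I" "S \<subseteq> I" "0 \<le> p" "p \<le> 1"
  shows "map_pmf (cnt S) (Pi_pmf I False (\<lambda>_. bernoulli_pmf p)) = binomial_pmf (card S) p"
proof -
  have fS: "finite S" using assms finite_subset by blast
  have "map_pmf (cnt S) (Pi_pmf I False (\<lambda>_. bernoulli_pmf p)) = map_pmf (cnt S) (Pi_pmf S False (\<lambda>_. bernoulli_pmf p))"
    by (rule map_Pi_restrict[OF assms(1,2)]) (simp add: cnt_restrict)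
  also have "\<dots> = binomial_pmf (card S) p"
    using binomial_pmf_altdef'[OF fS refl, of p False] assms by (simp add: cnt_def[abs_def])
  finally show ?thesis .
qed

lemma prob_cnt:
  assumes "finite I" "S \<subseteq> I" "0 \<le> p" "p \<le> 1"
  shows "measure_pmf.prob (Pi_pmf I False (\<lambda>_. bernoulli_pmf p)) {G. cnt S G = k}
     = pmf (binomial_pmf (card S) p) k"
proof -
  have "pmf (map_pmf (cnt S) (Pi_pmf I False (\<lambda>_. bernoulli_pmf p))) k = measure_pmf.prob (Pi_pmf I False (\<lambda>_. bernoulli_pmf p)) {G. cnt S G = k}"
    by (simp add: pmf_map vimage_def)
  then show ?thesis using map_cnt[OF assms] by simp
qed

lemma cnt_merge:
  assumes "finite S'" "e0 \<notin> S'" "\<And>x. x \<in> S' \<Longrightarrow> h x = f x"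
  shows "cnt (insert e0 S') (h(e0:=y)) = cnt S' f + (if y then 1 else 0)"
proof -
  have "{e \<in> insert e0 S'. (h(e0:=y)) e} = {e\<in>S'. f e} \<union> (if y then {e0} else {})"
    using assms by auto
  then show ?thesis using assms unfolding cnt_def by (auto simp: card_insert_if)
qed

lemma map_cnt2:
  assumes "finite I" "S \<subseteq> I" "T \<subseteq> I" "S \<inter> T = {e0}" "0 \<le> p" "p \<le> 1"
  shows "map_pmf (\<lambda>G. (cnt S G, cnt T G)) (Pi_pmf I False (\<lambda>_. bernoulli_pmf p)) =
    map_pmf (\<lambda>(y,(a,b)). (a + (if y then 1 else 0), b + (if y then 1 else 0)))
      (pair_pmf (bernoulli_pmf p) (pair_pmf (binomial_pmf (card S - 1) p) (binomial_pmf (card T - 1) p)))"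
proof -
  define S' where "S' = S - {e0}"
  define T' where "T' = T - {e0}"
  define B where "B = (\<lambda>_::nat set. bernoulli_pmf p)"
  have fS: "finite S'" "finite T'" using assms finite_subset unfolding S'_def T'_def by auto
  have e0: "e0 \<notin> S' \<union> T'" "S' \<inter> T' = {}" using assms unfolding S'_def T'_def by auto
  have SS: "S = insert e0 S'" "T = insert e0 T'" using assms unfolding S'_def T'_def by auto
  have cS: "card S' = card S - 1" "card T' = card T - 1" unfolding S'_def T'_def
    using assms by (auto simp: card_Diff_singleton_if)
  define J where "J = insert e0 (S' \<union> T')"
  have JI: "J \<subseteq> I" using assms SS unfolding J_def by auto
  have key: "(cnt S ((\<lambda>x. if x \<in> S' then f x else g x)(e0 := y)), cnt T ((\<lambda>x. if x \<in> S' then f x else g x)(e0 := y))) =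
         (cnt S' f + (if y then 1 else 0), cnt T' g + (if y then 1 else 0))" for y f g
  proof -
      have "cnt (insert e0 S') ((\<lambda>x. if x \<in> S' then f x else g x)(e0 := y)) = cnt S' f + (if y then 1 else 0)"
        by (rule cnt_merge) (use fS e0 in auto)
      moreover have "cnt (insert e0 T') ((\<lambda>x. if x \<in> S' then f x else g x)(e0 := y)) = cnt T' g + (if y then 1 else 0)"
        by (rule cnt_merge) (use fS e0 in auto)
      ultimately show ?thesis unfolding SS by simp
  qed
  have e1: "map_pmf (\<lambda>G. (cnt S G, cnt T G)) (Pi_pmf I False B) = map_pmf (\<lambda>G. (cnt S G, cnt T G)) (Pi_pmf J False B)"
  proof (rule map_Pi_restrict[OF assms(1) JI])
    fix G
    have "S \<subseteq> J" "T \<subseteq> J" unfolding J_def SS by auto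
    then show "(cnt S G, cnt T G) = (cnt S (\<lambda>x. if x \<in> J then G x else False), cnt T (\<lambda>x. if x \<in> J then G x else False))"
      by (simp only: cnt_restrict)
  qed
  have e2: "Pi_pmf J False B = map_pmf (\<lambda>(y,f). f(e0:=y)) (pair_pmf (B e0) (Pi_pmf (S' \<union> T') False B))"
    unfolding J_def by (rule Pi_pmf_insert) (use fS e0 in auto)
  have e3: "Pi_pmf (S' \<union> T') False B = map_pmf (\<lambda>(f,g) x. if x \<in> S' then f x else g x)
             (pair_pmf (Pi_pmf S' False B) (Pi_pmf T' False B))"
    by (rule Pi_pmf_union) (use fS e0 in auto)
  have e4: "pair_pmf (B e0) (map_pmf (\<lambda>(f,g) x. if x \<in> S' then f x else g x)
             (pair_pmf (Pi_pmf S' False B) (Pi_pmf T' False B)))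
     = map_pmf (\<lambda>(y,z). (y, (\<lambda>(f,g) x. if x \<in> S' then f x else g x) z)) (pair_pmf (B e0) (pair_pmf (Pi_pmf S' False B) (Pi_pmf T' False B)))"
    by (simp only: pair_map_pmf2 apsnd_def map_prod_def id_apply)
  have e5: "map_pmf (\<lambda>G. (cnt S G, cnt T G)) (map_pmf (\<lambda>(y,f). f(e0:=y)) (map_pmf (\<lambda>(y,z). (y, (\<lambda>(f,g) x. if x \<in> S' then f x else g x) z)) (pair_pmf (B e0) (pair_pmf (Pi_pmf S' False B) (Pi_pmf T' False B)))))
     = map_pmf (\<lambda>(y,(a,b)). (a + (if y then 1 else 0), b + (if y then 1 else 0))) (map_pmf (\<lambda>(y,(f,g)). (y, (cnt S' f, cnt T' g))) (pair_pmf (B e0) (pair_pmf (Pi_pmf S' False B) (Pi_pmf T' False B))))"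
    unfolding pmf.map_comp o_def
    by (intro map_pmf_cong refl) (simp only: split_def key fst_conv snd_conv)
  have e6: "map_pmf (\<lambda>(y,(f,g)). (y, (cnt S' f, cnt T' g))) (pair_pmf (B e0) (pair_pmf (Pi_pmf S' False B) (Pi_pmf T' False B)))
     = pair_pmf (B e0) (pair_pmf (map_pmf (cnt S') (Pi_pmf S' False B)) (map_pmf (cnt T') (Pi_pmf T' False B)))"
  proof -
    have "pair_pmf (map_pmf (cnt S') (Pi_pmf S' False B)) (map_pmf (cnt T') (Pi_pmf T' False B))
      = map_pmf (\<lambda>(a,b). (cnt S' a, cnt T' b)) (pair_pmf (Pi_pmf S' False B) (Pi_pmf T' False B))"
      by (rule map_pair[symmetric])
    then show ?thesis
      by (simp only: pair_map_pmf2 pmf.map_comp) (intro map_pmf_cong refl, auto simp: apsnd_def map_prod_def split_def)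
  qed
  have e7: "map_pmf (cnt S') (Pi_pmf S' False B) = binomial_pmf (card S - 1) p"
    unfolding B_def cS(1)[symmetric] by (rule map_cnt) (use fS assms in auto)
  have e8: "map_pmf (cnt T') (Pi_pmf T' False B) = binomial_pmf (card T - 1) p"
    unfolding B_def cS(2)[symmetric] by (rule map_cnt) (use fS assms in auto)
  have "map_pmf (\<lambda>G. (cnt S G, cnt T G)) (Pi_pmf I False B) =
    map_pmf (\<lambda>(y,(a,b)). (a + (if y then 1 else 0), b + (if y then 1 else 0)))
      (pair_pmf (B e0) (pair_pmf (binomial_pmf (card S - 1) p) (binomial_pmf (card T - 1) p)))"
    by (simp only: e1 e2 e3 e4 e5 e6 e7 e8)
  then show ?thesis unfolding B_def by simp
qed

lemma pmf_joint:
  fixes X Y :: "nat pmf"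
  assumes "0 \<le> p" "p \<le> 1"
  shows "pmf (map_pmf (\<lambda>(y,(a,b)). (a + (if y then 1 else 0), b + (if y then 1 else 0)))
      (pair_pmf (bernoulli_pmf p) (pair_pmf X Y))) (k,k) =
    p * (if k = 0 then 0 else pmf X (k-1) * pmf Y (k-1)) + (1-p) * (pmf X k * pmf Y k)"
proof -
  define h where "h = (\<lambda>y::bool. \<lambda>(a::nat,b::nat). (a + (if y then 1 else 0), b + (if y then 1 else 0)))"
  have "map_pmf (\<lambda>(y,(a,b)). (a + (if y then 1 else 0), b + (if y then 1 else 0)))
      (pair_pmf (bernoulli_pmf p) (pair_pmf X Y)) = bind_pmf (bernoulli_pmf p) (\<lambda>y. map_pmf (h y) (pair_pmf X Y))"
    unfolding pair_pmf_def[of "bernoulli_pmf p"] map_bind_pmf h_def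
    by (intro bind_pmf_cong refl) (simp add: map_pmf_def bind_assoc_pmf bind_return_pmf case_prod_beta)
  then have eq: "pmf (map_pmf (\<lambda>(y,(a,b)). (a + (if y then 1 else 0), b + (if y then 1 else 0)))
      (pair_pmf (bernoulli_pmf p) (pair_pmf X Y))) (k,k) = pmf (map_pmf (h True) (pair_pmf X Y)) (k,k) * p + pmf (map_pmf (h False) (pair_pmf X Y)) (k,k) * (1-p)"
    using assms by (simp add: pmf_bind)
  have hF: "h False = id" unfolding h_def by auto
  have hT: "pmf (map_pmf (h True) (pair_pmf X Y)) (k,k) = (if k = 0 then 0 else pmf X (k-1) * pmf Y (k-1))"
  proof (cases k)
    case 0
    then show ?thesis by (subst pmf_map_outside) (auto simp: h_def)
  next
    case (Suc m)
    have "inj (h True)" unfolding h_def inj_def by auto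
    then have "pmf (map_pmf (h True) (pair_pmf X Y)) (h True (m,m)) = pmf (pair_pmf X Y) (m,m)"
      by (rule pmf_map_inj')
    then show ?thesis using Suc by (simp add: h_def pmf_pair)
  qed
  show ?thesis unfolding eq hT hF by (simp add: pmf_pair)
qed

definition inc :: "nat \<Rightarrow> nat \<Rightarrow> nat set set" where
  "inc n v = (\<lambda>u. {u, v}) ` {u. u < n \<and> u \<noteq> v}"

lemma inj_pair: "inj_on (\<lambda>u. {u, v::nat}) A"
  unfolding inj_on_def by (auto simp: doubleton_eq_iff)

lemma degree_cnt: "degree n G v = cnt (inc n v) G"
proof -
  have "{e \<in> inc n v. G e} = (\<lambda>u. {u, v}) ` {u. u < n \<and> u \<noteq> v \<and> G {u, v}}"
    unfolding inc_def by auto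
  then show ?thesis unfolding degree_def cnt_def by (simp add: card_image[OF inj_pair])
qed

lemma finite_pairs: "finite (pairs n)"
proof -
  have "pairs n \<subseteq> Pow {..<n}" unfolding pairs_def by auto
  then show ?thesis by (rule finite_subset) auto
qed

lemma inc_sub: "v < n \<Longrightarrow> inc n v \<subseteq> pairs n"
  unfolding inc_def pairs_def
  by clarify (metis insert_commute linorder_neqE_nat)

lemma card_inc: "v < n \<Longrightarrow> card (inc n v) = n - 1"
proof -
  assume v: "v < n"
  have "{u. u < n \<and> u \<noteq> v} = {..<n} - {v}" by auto
  then have "card {u. u < n \<and> u \<noteq> v} = n - 1" using v by simp
  then show ?thesis unfolding inc_def by (simp add: card_image[OF inj_pair])
qed

lemma inc_inter: "u \<noteq> v \<Longrightarrow> u < n \<Longrightarrow> v < n \<Longrightarrow> inc n u \<inter> inc n v = {{u, v}}"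
  unfolding inc_def by (auto simp: doubleton_eq_iff insert_commute)

lemma prob_deg:
  assumes "v < n" "0 \<le> p" "p \<le> 1"
  shows "measure_pmf.prob (Gnp n p) {G. degree n G v = k} = pmf (binomial_pmf (n - 1) p) k"
  unfolding Gnp_def degree_cnt
  using prob_cnt[OF finite_pairs inc_sub[OF assms(1)] assms(2,3)] card_inc[OF assms(1)] by simp

lemma prob_deg2:
  assumes "u \<noteq> v" "u < n" "v < n" "0 \<le> p" "p \<le> 1"
  shows "measure_pmf.prob (Gnp n p) {G. degree n G u = k \<and> degree n G v = k} =
    p * (if k = 0 then 0 else pmf (binomial_pmf (n - 2) p) (k-1) ^ 2) + (1-p) * (pmf (binomial_pmf (n - 2) p) k ^ 2)"
proof -
  let ?M = "Pi_pmf (pairs n) False (\<lambda>_. bernoulli_pmf p)"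
  let ?f = "\<lambda>G. (cnt (inc n u) G, cnt (inc n v) G)"
  have "measure_pmf.prob (Gnp n p) {G. degree n G u = k \<and> degree n G v = k} = pmf (map_pmf ?f ?M) (k,k)"
    unfolding Gnp_def degree_cnt pmf_map by (intro arg_cong[where f="measure_pmf.prob _"]) auto
  also have "map_pmf ?f ?M = map_pmf (\<lambda>(y,(a,b)). (a + (if y then 1 else 0), b + (if y then 1 else 0)))
      (pair_pmf (bernoulli_pmf p) (pair_pmf (binomial_pmf (card (inc n u) - 1) p) (binomial_pmf (card (inc n v) - 1) p)))"
    by (rule map_cnt2[OF finite_pairs inc_sub[OF assms(2)] inc_sub[OF assms(3)] inc_inter[OF assms(1-3)] assms(4,5)])
  finally have "measure_pmf.prob (Gnp n p) {G. degree n G u = k \<and> degree n G v = k} =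
    pmf (map_pmf (\<lambda>(y,(a,b)). (a + (if y then 1 else 0), b + (if y then 1 else 0)))
      (pair_pmf (bernoulli_pmf p) (pair_pmf (binomial_pmf (card (inc n u) - 1) p) (binomial_pmf (card (inc n v) - 1) p)))) (k,k)" .
  moreover have "card (inc n u) - 1 = n - 2" "card (inc n v) - 1 = n - 2" using card_inc assms by auto
  ultimately show ?thesis unfolding pmf_joint[OF assms(4,5)] by (simp only: power2_eq_square)
qed

lemma pmf_binomial_Suc:
  assumes "0 \<le> p" "p \<le> 1"
  shows "pmf (binomial_pmf (Suc m) p) k =
    p * (if k = 0 then 0 else pmf (binomial_pmf m p) (k-1)) + (1-p) * pmf (binomial_pmf m p) k"
proof -
  define h where "h = (\<lambda>y::bool. \<lambda>a::nat. (if y then 1 else 0) + a)"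
  have "binomial_pmf (Suc m) p = bind_pmf (bernoulli_pmf p) (\<lambda>y. map_pmf (h y) (binomial_pmf m p))"
    using binomial_pmf_Suc[of p m] assms by (simp add: map_pmf_def h_def)
  then have eq: "pmf (binomial_pmf (Suc m) p) k = pmf (map_pmf (h True) (binomial_pmf m p)) k * p + pmf (map_pmf (h False) (binomial_pmf m p)) k * (1-p)"
    using assms by (simp add: pmf_bind)
  have hF: "h False = id" unfolding h_def by auto
  have hT: "pmf (map_pmf (h True) (binomial_pmf m p)) k = (if k = 0 then 0 else pmf (binomial_pmf m p) (k-1))"
  proof (cases k)
    case 0
    then show ?thesis by (subst pmf_map_outside) (auto simp: h_def)
  next
    case (Suc j)
    have "inj (h True)" unfolding h_def inj_def by auto
    then have "pmf (map_pmf (h True) (binomial_pmf m p)) (h True j) = pmf (binomial_pmf m p) j"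
      by (rule pmf_map_inj')
    then show ?thesis using Suc by (simp add: h_def del: pmf_binomial)
  qed
  show ?thesis unfolding eq hT hF by (simp del: pmf_binomial)
qed

lemma finite_set_Gnp: "finite (set_pmf (Gnp n p))"
proof -
  have "set_pmf (Gnp n p) \<subseteq> {f. \<forall>x. x \<notin> pairs n \<longrightarrow> f x = False}"
    unfolding Gnp_def by (rule set_Pi_pmf_subset[OF finite_pairs])
  also have "\<dots> \<subseteq> (\<lambda>S x. x \<in> S) ` Pow (pairs n)"
  proof
    fix f assume "f \<in> {f. \<forall>x. x \<notin> pairs n \<longrightarrow> f x = False}"
    then have "f = (\<lambda>x. x \<in> {x\<in>pairs n. f x})" "{x\<in>pairs n. f x} \<in> Pow (pairs n)" by auto
    then show "f \<in> (\<lambda>S x. x \<in> S) ` Pow (pairs n)" by blast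
  qed
  finally show ?thesis using finite_pairs by (meson finite_Pow_iff finite_imageI finite_subset)
qed

lemma num_deg_sum: "real (num_deg n G k) = (\<Sum>v<n. indicator {G. degree n G v = k} G)"
proof -
  have "real (num_deg n G k) = real (card ({..<n} \<inter> {v. degree n G v = k}))"
    unfolding num_deg_def by (intro arg_cong[where f="\<lambda>x. real (card x)"]) auto
  also have "\<dots> = (\<Sum>v<n. indicator {G. degree n G v = k} G)"
    by (simp add: indicator_def sum.If_cases)
  finally show ?thesis .
qed

lemma second_moment:
  fixes k n :: nat and p :: real
  assumes "0 \<le> p" "p \<le> 1" "2 \<le> n"
  defines "(q::real) \<equiv> pmf (binomial_pmf (n - 1) p) k"
  defines "(J::real) \<equiv> p * (if k = 0 then 0 else pmf (binomial_pmf (n - 2) p) (k-1) ^ 2) + (1-p) * (pmf (binomial_pmf (n - 2) p) k ^ 2)"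
  shows "measure_pmf.expectation (Gnp n p) (\<lambda>G. (real (num_deg n G k) - real n * q)^2) = real n * q + real n * (real n - 1) * J - real n^2 * q^2"
proof -
  let ?M = "Gnp n p"
  let ?A = "\<lambda>v. {G. degree n G v = k}"
  have int: "integrable ?M f" for f :: "_ \<Rightarrow> real"
    by (rule integrable_measure_pmf_finite[OF finite_set_Gnp])
  have E1: "measure_pmf.expectation ?M (indicator (?A v)) = q" if "v < n" for v
    using prob_deg[OF that assms(1,2)] unfolding q_def by simp
  have E2: "measure_pmf.expectation ?M (\<lambda>G. indicator (?A u) G * indicator (?A v) G) = (if u = v then q else J)"
    if "u < n" "v < n" for u v
  proof (cases "u = v")
    case True
    have "(\<lambda>G. indicator (?A u) G * indicator (?A v) G :: real) = indicator (?A u)"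
      using True by (auto simp: indicator_def)
    then show ?thesis using E1[OF that(1)] True by simp
  next
    case False
    have "(\<lambda>G. indicator (?A u) G * indicator (?A v) G :: real) = indicator {G. degree n G u = k \<and> degree n G v = k}"
      by (auto simp: indicator_def)
    then show ?thesis using prob_deg2[OF False that assms(1,2), of k] False unfolding J_def by simp
  qed
  have X: "(\<lambda>G. (real (num_deg n G k) - n * q)^2) = (\<lambda>G. (\<Sum>u<n. \<Sum>v<n. indicator (?A u) G * indicator (?A v) G) - 2 * (n*q) * (\<Sum>v<n. indicator (?A v) G) + (n*q)^2)"
    unfolding num_deg_sum by (auto simp: power2_eq_square algebra_simps sum_product)
  have "measure_pmf.expectation ?M (\<lambda>G. (real (num_deg n G k) - n * q)^2) =
     (\<Sum>u<n. \<Sum>v<n. measure_pmf.expectation ?M (\<lambda>G. indicator (?A u) G * indicator (?A v) G)) - 2 * (n*q) * (\<Sum>v<n. measure_pmf.expectation ?M (indicator (?A v))) + (n*q)^2"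
  proof -
    have L: "measure_pmf.expectation ?M (\<lambda>x. F x - c * H x + d) = measure_pmf.expectation ?M F - c * measure_pmf.expectation ?M H + d" for F H :: "_ \<Rightarrow> real" and c d
      by (simp add: int)
    have S1: "measure_pmf.expectation ?M (\<lambda>G. \<Sum>u<n. \<Sum>v<n. indicator (?A u) G * indicator (?A v) G :: real) = (\<Sum>u<n. \<Sum>v<n. measure_pmf.expectation ?M (\<lambda>G. indicator (?A u) G * indicator (?A v) G))"
      by (simp only: Bochner_Integration.integral_sum[OF int])
    have S2: "measure_pmf.expectation ?M (\<lambda>G. \<Sum>v<n. indicator (?A v) G :: real) = (\<Sum>v<n. measure_pmf.expectation ?M (indicator (?A v)))"
      by (simp only: Bochner_Integration.integral_sum[OF int])
    show ?thesis unfolding X L S1 S2 ..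
  qed
  also have "(\<Sum>v<n. measure_pmf.expectation ?M (indicator (?A v))) = n * q"
    using E1 by simp
  also have "(\<Sum>u<n. \<Sum>v<n. measure_pmf.expectation ?M (\<lambda>G. indicator (?A u) G * indicator (?A v) G)) = (\<Sum>u<n. q + (n - 1) * J)"
  proof (rule sum.cong[OF refl])
    fix u assume u: "u \<in> {..<n}"
    have "(\<Sum>v<n. measure_pmf.expectation ?M (\<lambda>G. indicator (?A u) G * indicator (?A v) G)) = (\<Sum>v<n. if u = v then q else J)"
      using E2 u by simp
    also have "\<dots> = q + (\<Sum>v\<in>{..<n}-{u}. if u = v then q else J)"
      using u sum.remove[of "{..<n}" u "\<lambda>v. if u = v then q else J"] by simp
    also have "(\<Sum>v\<in>{..<n}-{u}. if u = v then q else J) = (\<Sum>v\<in>{..<n}-{u}. J)"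
      by (rule sum.cong) auto
    also have "(\<Sum>v\<in>{..<n}-{u}. J) = (n - 1) * J" using u by simp
    finally show "(\<Sum>v<n. measure_pmf.expectation ?M (\<lambda>G. indicator (?A u) G * indicator (?A v) G)) = q + (n - 1) * J" .
  qed
  finally show ?thesis using assms(3) by (simp add: power2_eq_square algebra_simps of_nat_diff)
qed

lemma choose_ratio: "real (N choose Suc j) * real (Suc j) = real (N choose j) * real (N - j)"
proof -
  have "(N - j) * (N choose j) = N * ((N - 1) choose j)" by (rule binomial_absorb_comp)
  moreover have "Suc j * (N choose Suc j) = N * ((N - 1) choose (Suc j - 1))"
    by (rule times_binomial_minus1_eq) simp
  ultimately have "(N choose Suc j) * Suc j = (N choose j) * (N - j)" by (simp add: mult.commute)
  then show ?thesis by (metis of_nat_mult)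
qed

lemma pmf_ratio:
  assumes "j < N" and that: "0 \<le> p" "p \<le> 1"
  shows "pmf (binomial_pmf N p) (Suc j) * (real (Suc j) * (1 - p)) = pmf (binomial_pmf N p) j * (real (N - j) * p)"
proof -
  have e: "N - j = Suc (N - Suc j)" using assms by simp
  have "pmf (binomial_pmf N p) (Suc j) * (real (Suc j) * (1 - p)) =
     (real (N choose Suc j) * real (Suc j)) * p ^ Suc j * (1-p) ^ (N - Suc j) * (1 - p)"
    using that by (simp add: algebra_simps)
  also have "\<dots> = real (N choose j) * real (N - j) * p ^ Suc j * (1-p) ^ (N - Suc j) * (1 - p)"
    by (simp only: choose_ratio)
  also have "\<dots> = pmf (binomial_pmf N p) j * (real (N - j) * p)"
    using that by (simp add: e algebra_simps)
  finally show ?thesis .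
qed

lemma tail_k:
  fixes n k :: nat and p t :: real
  assumes p: "0 \<le> p" "p \<le> 1/2" and n: "2 \<le> n" and t: "0 < t"
    and cond: "1 \<le> k \<Longrightarrow> k \<le> n - 2 \<and> real k * (1-p) \<le> real (n - 1 - k) * p"
  shows "measure_pmf.prob (Gnp n p) {G. t < \<bar>real (num_deg n G k) - expdeg n p k\<bar>}
     \<le> (expdeg n p k + 2 * p * expdeg n p k ^ 2) / t ^ 2"
proof -
  define m where "m = n - 2"
  have nm: "n - 1 = Suc m" "n - 2 = m" using n unfolding m_def by auto
  define q where "q = pmf (binomial_pmf (n - 1) p) k"
  define a where "a = (if k = 0 then 0 else pmf (binomial_pmf m p) (k - 1))"
  define b where "b = pmf (binomial_pmf m p) k"
  define J where "J = p * (if k = 0 then 0 else pmf (binomial_pmf (n - 2) p) (k-1) ^ 2) + (1-p) * (pmf (binomial_pmf (n - 2) p) k ^ 2)"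
  have p1: "p \<le> 1" using p by simp
  have mu: "expdeg n p k = real n * q"
    unfolding expdeg_def q_def using p p1 by (simp add: diff_commute)
  have qab: "q = p * a + (1 - p) * b"
    unfolding q_def a_def b_def nm by (rule pmf_binomial_Suc[OF p(1) p1])
  have Jab: "J = p * a^2 + (1-p) * b^2"
    unfolding J_def a_def b_def nm by auto
  have a0: "0 \<le> a" unfolding a_def by auto
  have ab: "a \<le> b"
  proof (cases "k = 0")
    case True then show ?thesis unfolding a_def b_def by simp
  next
    case False
    then obtain j where kj: "k = Suc j" by (cases k) auto
    have c: "k \<le> m" "real k * (1-p) \<le> real (n - 1 - k) * p" using cond False unfolding m_def by auto
    have jm: "j < m" using c kj by simp
    have nk: "n - 1 - k = m - j" using kj nm by simp
    have r: "b * (real k * (1 - p)) = pmf (binomial_pmf m p) j * (real (m - j) * p)"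
      unfolding b_def kj by (rule pmf_ratio[OF jm p(1) p1])
    have pos: "0 < real (m - j) * p \<or> pmf (binomial_pmf m p) j = 0"
    proof (cases "p = 0")
      case True then show ?thesis using c(2) kj by simp
    next
      case False then show ?thesis using jm p by auto
    qed
    have "pmf (binomial_pmf m p) j * (real (m - j) * p) \<le> b * (real (m - j) * p)"
      using r c(2) nk b_def by (metis mult_left_mono pmf_nonneg)
    then have "pmf (binomial_pmf m p) j \<le> b" using pos b_def
      by (metis mult_le_cancel_right pmf_nonneg less_eq_real_def not_less)
    then show ?thesis unfolding a_def using kj by simp
  qed
  have b0: "0 \<le> b" using a0 ab by simp
  have hq: "(1 - p) * b \<le> q" using qab a0 p by simp
  have J_q: "J - q^2 = p * (1 - p) * (a - b)^2" unfolding Jab qab by (simp add: power2_eq_square algebra_simps)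
  have "(b - a)^2 \<le> b^2" using a0 ab by (intro power_mono) auto
  then have "(a - b)^2 \<le> b^2" by (simp add: power2_commute)
  then have "J - q^2 \<le> p * (1 - p) * b^2" unfolding J_q using p by (simp add: mult_left_mono)
  also have "\<dots> = p / (1 - p) * ((1 - p) * b)^2" using p by (simp add: power2_eq_square field_simps)
  also have "\<dots> \<le> 2 * p * q^2"
  proof -
    have "((1 - p) * b)^2 \<le> q^2" using hq b0 p by (simp add: power_mono)
    moreover have "p / (1 - p) \<le> 2 * p"
    proof -
      have "p * 1 \<le> p * (2 * (1 - p))" using p by (intro mult_left_mono) auto
      then show ?thesis using p by (simp add: field_simps)
    qed
    ultimately show ?thesis
      using mult_mono[of "p / (1 - p)" "2 * p" "((1 - p) * b)^2" "q^2"] p by simp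
  qed
  finally have JJ: "J - q^2 \<le> 2 * p * q^2" .
  have q0: "0 \<le> q" unfolding q_def by simp
  have V: "real n * q + real n * (real n - 1) * J - real n^2 * q^2 \<le> expdeg n p k + 2 * p * expdeg n p k ^ 2"
  proof -
    have "real n * q + real n * (real n - 1) * J - real n^2 * q^2 \<le> real n * q + real n * (real n - 1) * (J - q^2)"
      using q0 n by (simp add: algebra_simps power2_eq_square)
    also have "\<dots> \<le> real n * q + real n * (real n - 1) * (2 * p * q^2)"
      using JJ n by (intro add_left_mono mult_left_mono) auto
    also have "\<dots> \<le> real n * q + real n * real n * (2 * p * q^2)"
      using n p q0 by (intro add_left_mono mult_right_mono) auto
    also have "\<dots> = expdeg n p k + 2 * p * expdeg n p k ^ 2" unfolding mu by (simp add: power2_eq_square)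
    finally show ?thesis .
  qed
  let ?M = "Gnp n p"
  let ?u = "\<lambda>G. (real (num_deg n G k) - real n * q)^2"
  have "measure_pmf.prob ?M {G. t < \<bar>real (num_deg n G k) - expdeg n p k\<bar>} \<le> measure_pmf.prob ?M {G\<in>space ?M. ?u G \<ge> t^2}"
  proof (rule measure_pmf.finite_measure_mono)
    show "{G. t < \<bar>real (num_deg n G k) - expdeg n p k\<bar>} \<subseteq> {G\<in>space ?M. ?u G \<ge> t^2}"
    proof clarify
      fix G assume "t < \<bar>real (num_deg n G k) - expdeg n p k\<bar>"
      then have "t^2 \<le> \<bar>real (num_deg n G k) - expdeg n p k\<bar>^2" using t by (intro power_mono) auto
      then show "G \<in> space ?M \<and> ?u G \<ge> t^2" unfolding mu by simp
    qed
  qed simp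
  also have "\<dots> \<le> measure_pmf.expectation ?M ?u / t^2"
    by (rule integral_Markov_inequality_measure) (use t in \<open>auto intro: integrable_measure_pmf_finite[OF finite_set_Gnp]\<close>)
  also have "measure_pmf.expectation ?M ?u = real n * q + real n * (real n - 1) * J - real n^2 * q^2"
    unfolding q_def J_def by (rule second_moment[OF p(1) p1 n])
  also have "\<dots> / t^2 \<le> (expdeg n p k + 2 * p * expdeg n p k ^ 2) / t^2"
    using V t by (simp add: divide_right_mono)
  finally show ?thesis .
qed

lemma expdeg_pmf: "0 \<le> p \<Longrightarrow> p \<le> 1 \<Longrightarrow> expdeg n p k = real n * pmf (binomial_pmf (n - 1) p) k"
  unfolding expdeg_def by (simp add: diff_commute)

lemma expdeg_nonneg: "0 \<le> p \<Longrightarrow> p \<le> 1 \<Longrightarrow> 0 \<le> expdeg n p k"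
  by (simp add: expdeg_pmf)

lemma expdeg_le: "0 \<le> p \<Longrightarrow> p \<le> 1 \<Longrightarrow> expdeg n p k \<le> real n"
  using pmf_le_1[of "binomial_pmf (n-1) p" k] by (simp add: expdeg_pmf mult_left_le del: pmf_binomial)

lemma ln_sq_bound:
  fixes x :: real assumes "1 \<le> x"
  shows "ln x ^ 2 / x \<le> 16 / sqrt x"
proof -
  have s: "0 < sqrt (sqrt x)" using assms by simp
  have "ln x = 4 * ln (sqrt (sqrt x))" using assms by (simp add: ln_sqrt)
  also have "\<dots> \<le> 4 * sqrt (sqrt x)" using ln_le_minus_one[OF s] by simp
  finally have l: "ln x \<le> 4 * sqrt (sqrt x)" .
  have l0: "0 \<le> ln x" using assms by simp
  have "ln x ^ 2 \<le> (4 * sqrt (sqrt x))^2" using l l0 by (intro power_mono) auto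
  also have "\<dots> = 16 * sqrt x" using assms by (simp add: power_mult_distrib)
  finally have "ln x ^ 2 \<le> 16 * sqrt x" .
  then have "ln x ^ 2 / x \<le> 16 * sqrt x / x" using assms by (simp add: divide_right_mono)
  also have "16 * sqrt x / x = 16 / sqrt x"
  proof -
    have sx: "sqrt x * sqrt x = x" "0 < sqrt x" using assms by auto
    show ?thesis using sx by (simp add: field_simps)
  qed
  finally show ?thesis .
qed

locale good =
  fixes n :: nat and p L :: real
  assumes n2: "2 \<le> n" and L_def: "L = ln (real n)" and L1: "1 \<le> L"
    and lo: "L / 2 \<le> real n * p" and hi: "real n * p \<le> 2 * L" and p2: "p \<le> 1/2"
    and nL: "L / 1000 + 1 \<le> real n / 2"
begin

lemma p0: "0 \<le> p"
proof -
  have "0 \<le> real n * p" using lo L1 by linarith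
  then show ?thesis using n2 by (simp add: zero_le_mult_iff)
qed

lemma p1: "p \<le> 1" using p2 by simp

lemma big: "real k \<le> L / 1000 \<Longrightarrow> real n / 2 \<le> real (n - 1 - k) \<and> L / 4 \<le> real (n - 1 - k) * p \<and> k \<le> n - 2"
proof -
  assume k: "real k \<le> L / 1000"
  have k1: "real k + 1 \<le> real n / 2" using k nL by linarith
  then have kn: "k + 1 < n" using n2 by linarith
  then have e: "real (n - 1 - k) = real n - 1 - real k" by (simp add: of_nat_diff)
  have a: "real n / 2 \<le> real (n - 1 - k)" unfolding e using k1 by linarith
  have "real n / 2 * p \<le> real (n - 1 - k) * p" using a p0 by (rule mult_right_mono)
  moreover have "L / 4 \<le> real n / 2 * p" using lo by simp
  moreover have "k \<le> n - 2" using kn by simp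
  ultimately show ?thesis using a by linarith
qed

lemma growth:
  assumes k: "real (Suc k) \<le> L / 1000"
  shows "4 * expdeg n p k \<le> expdeg n p (Suc k)"
proof -
  have kk: "real k \<le> L / 1000" using k by simp
  note b = big[OF kk]
  have kN: "k < n - 1" using b n2 by linarith
  have r: "pmf (binomial_pmf (n-1) p) (Suc k) * (real (Suc k) * (1 - p)) = pmf (binomial_pmf (n-1) p) k * (real (n - 1 - k) * p)"
    by (rule pmf_ratio[OF kN p0 p1])
  then have r2: "expdeg n p (Suc k) * (real (Suc k) * (1 - p)) = expdeg n p k * (real (n - 1 - k) * p)"
    unfolding expdeg_pmf[OF p0 p1] by (metis mult.assoc)
  have m0: "0 \<le> expdeg n p k" "0 \<le> expdeg n p (Suc k)" using expdeg_nonneg[OF p0 p1] by auto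
  have "expdeg n p k * (L / 4) \<le> expdeg n p k * (real (n - 1 - k) * p)"
    using b m0 by (intro mult_left_mono) auto
  also have "\<dots> = expdeg n p (Suc k) * (real (Suc k) * (1 - p))" using r2 by simp
  also have "\<dots> \<le> expdeg n p (Suc k) * (L / 1000)"
  proof (intro mult_left_mono m0)
    have "real (Suc k) * (1 - p) \<le> real (Suc k) * 1" using p0 by (intro mult_left_mono) auto
    then show "real (Suc k) * (1 - p) \<le> L / 1000" using k by (metis mult_1_right order_trans)
  qed
  finally have "expdeg n p k * (L / 4) \<le> expdeg n p (Suc k) * (L / 1000)" .
  then have "250 * expdeg n p k * L \<le> expdeg n p (Suc k) * L" by (simp add: algebra_simps)
  then have "250 * expdeg n p k \<le> expdeg n p (Suc k)" using L1 by simp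
  then show ?thesis using m0 by simp
qed

lemma geo_lower:
  assumes "K0 \<le> k" "real k \<le> L / 1000"
  shows "4 ^ (k - K0) * expdeg n p K0 \<le> expdeg n p k"
  using assms
proof (induction k)
  case 0 then show ?case by simp
next
  case (Suc k)
  show ?case
  proof (cases "K0 = Suc k")
    case True then show ?thesis by simp
  next
    case False
    then have "K0 \<le> k" using Suc by simp
    then have ih: "4 ^ (k - K0) * expdeg n p K0 \<le> expdeg n p k" using Suc by simp
    have e: "Suc k - K0 = Suc (k - K0)" using \<open>K0 \<le> k\<close> by simp
    have "4 ^ (Suc k - K0) * expdeg n p K0 = 4 * (4 ^ (k - K0) * expdeg n p K0)" unfolding e by simp
    also have "\<dots> \<le> 4 * expdeg n p k" using ih by simp
    also have "\<dots> \<le> expdeg n p (Suc k)" by (rule growth) (use Suc in simp)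
    finally show ?thesis .
  qed
qed

end

context good begin

lemma term_bound:
  assumes k: "real k \<le> L / 1000" and mu2: "2 \<le> expdeg n p k"
  shows "measure_pmf.prob (Gnp n p) {G. expdeg n p k / ln (expdeg n p k) < \<bar>real (num_deg n G k) - expdeg n p k\<bar>}
     \<le> 16 / sqrt (expdeg n p k) + 2 * p * L^2"
proof -
  define \<mu> where "\<mu> = expdeg n p k"
  have lmu: "0 < ln \<mu>" using mu2 unfolding \<mu>_def by simp
  have mun: "\<mu> \<le> real n" unfolding \<mu>_def by (rule expdeg_le[OF p0 p1])
  have lmuL: "ln \<mu> \<le> L" unfolding L_def using mun mu2 \<mu>_def by simp
  have t: "0 < \<mu> / ln \<mu>" using lmu mu2 unfolding \<mu>_def by simp
  note b = big[OF k]
  have cond: "1 \<le> k \<Longrightarrow> k \<le> n - 2 \<and> real k * (1-p) \<le> real (n - 1 - k) * p"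
  proof -
    have "real k * (1 - p) \<le> real k" using p0 by (simp add: mult_left_le)
    also have "\<dots> \<le> L / 4" using k L1 by simp
    finally show ?thesis using b by linarith
  qed
  have "measure_pmf.prob (Gnp n p) {G. \<mu> / ln \<mu> < \<bar>real (num_deg n G k) - \<mu>\<bar>} \<le> (\<mu> + 2 * p * \<mu>^2) / (\<mu> / ln \<mu>)^2"
    unfolding \<mu>_def by (rule tail_k[OF p0 p2 n2 t[unfolded \<mu>_def] cond])
  also have "(\<mu> + 2 * p * \<mu>^2) / (\<mu> / ln \<mu>)^2 = ln \<mu> ^ 2 / \<mu> + 2 * p * ln \<mu> ^ 2"
    using lmu mu2 unfolding \<mu>_def by (simp add: field_simps power2_eq_square)
  also have "\<dots> \<le> 16 / sqrt \<mu> + 2 * p * L^2"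
  proof (rule add_mono)
    show "ln \<mu> ^ 2 / \<mu> \<le> 16 / sqrt \<mu>" by (rule ln_sq_bound) (use mu2 \<mu>_def in simp)
    have "ln \<mu> ^ 2 \<le> L^2" using lmu lmuL by (intro power_mono) auto
    then show "2 * p * ln \<mu> ^ 2 \<le> 2 * p * L^2" using p0 by (intro mult_left_mono) auto
  qed
  finally show ?thesis unfolding \<mu>_def .
qed

lemma fail_bound:
  assumes mu2: "2 \<le> expdeg n p K0"
  shows "measure_pmf.prob (Gnp n p) {G. \<not> (\<forall>k \<in> {K0 .. nat \<lfloor>L / 10^3\<rfloor>}.
                \<bar>real (num_deg n G k) - expdeg n p k\<bar> \<le> expdeg n p k / ln (expdeg n p k))}
     \<le> 32 / sqrt (expdeg n p K0) + (L + 1) * 4 * L^3 / real n"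
proof -
  define K1 where "K1 = nat \<lfloor>L / 10^3\<rfloor>"
  define R where "R = {K0..K1}"
  define A where "A = (\<lambda>k. {G. expdeg n p k / ln (expdeg n p k) < \<bar>real (num_deg n G k) - expdeg n p k\<bar>})"
  have kR: "real k \<le> L / 1000" if "k \<in> R" for k
  proof -
    have "k \<le> K1" using that R_def by simp
    then have "real k \<le> real K1" by simp
    also have "real K1 = of_int \<lfloor>L / 10^3\<rfloor>" unfolding K1_def using L1 by simp
    also have "\<dots> \<le> L / 1000" using of_int_floor_le[of "L/1000"] by simp
    finally show ?thesis .
  qed
  have mgeo: "4 ^ (k - K0) * expdeg n p K0 \<le> expdeg n p k" if "k \<in> R" for k
    by (rule geo_lower) (use that kR R_def in auto)
  have mk2: "2 \<le> expdeg n p k" if "k \<in> R" for k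
  proof -
    have "(1::real) \<le> 4 ^ (k - K0)" by simp
    then have "1 * expdeg n p K0 \<le> 4 ^ (k - K0) * expdeg n p K0" using mu2 by (intro mult_right_mono) auto
    then show ?thesis using mgeo[OF that] mu2 by linarith
  qed
  have sub: "{G. \<not> (\<forall>k \<in> {K0 .. nat \<lfloor>L / 10^3\<rfloor>}.
                \<bar>real (num_deg n G k) - expdeg n p k\<bar> \<le> expdeg n p k / ln (expdeg n p k))} = (\<Union>k\<in>R. A k)"
    unfolding R_def K1_def A_def by (auto simp: not_le)
  have "measure_pmf.prob (Gnp n p) (\<Union>k\<in>R. A k) \<le> (\<Sum>k\<in>R. measure_pmf.prob (Gnp n p) (A k))"
    by (rule measure_pmf.finite_measure_subadditive_finite) (auto simp: R_def)
  also have "\<dots> \<le> (\<Sum>k\<in>R. 16 * (1/2) ^ (k - K0) / sqrt (expdeg n p K0) + 2 * p * L^2)"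
  proof (rule sum_mono)
    fix k assume k: "k \<in> R"
    have "measure_pmf.prob (Gnp n p) (A k) \<le> 16 / sqrt (expdeg n p k) + 2 * p * L^2"
      unfolding A_def by (rule term_bound[OF kR[OF k] mk2[OF k]])
    also have "16 / sqrt (expdeg n p k) \<le> 16 * (1/2) ^ (k - K0) / sqrt (expdeg n p K0)"
    proof -
      have s0: "0 < sqrt (expdeg n p K0)" using mu2 by simp
      have "sqrt (4 ^ (k - K0) * expdeg n p K0) \<le> sqrt (expdeg n p k)" using mgeo[OF k] by simp
      moreover have "sqrt (4 ^ (k - K0) * expdeg n p K0) = 2 ^ (k - K0) * sqrt (expdeg n p K0)"
        by (simp add: real_sqrt_mult real_sqrt_power)
      ultimately have le: "2 ^ (k - K0) * sqrt (expdeg n p K0) \<le> sqrt (expdeg n p k)" by simp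
      have "16 / sqrt (expdeg n p k) \<le> 16 / (2 ^ (k - K0) * sqrt (expdeg n p K0))"
        using le s0 mk2[OF k] by (intro divide_left_mono) (auto intro!: mult_pos_pos)
      also have "\<dots> = 16 * (1/2) ^ (k - K0) / sqrt (expdeg n p K0)" by (simp add: field_simps power_one_over)
      finally show ?thesis .
    qed
    finally show "measure_pmf.prob (Gnp n p) (A k) \<le> 16 * (1/2) ^ (k - K0) / sqrt (expdeg n p K0) + 2 * p * L^2"
      by simp
  qed
  also have "\<dots> = 16 / sqrt (expdeg n p K0) * (\<Sum>k\<in>R. (1/2) ^ (k - K0)) + real (card R) * (2 * p * L^2)"
    by (simp add: sum.distrib sum_distrib_left sum_divide_distrib)
  also have "\<dots> \<le> 16 / sqrt (expdeg n p K0) * 2 + (L + 1) * (4 * L / real n * L^2)"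
  proof (rule add_mono)
    have "(\<Sum>k\<in>R. (1/2::real) ^ (k - K0)) = (\<Sum>i\<in>(\<lambda>k. k - K0) ` R. (1/2) ^ i)"
      by (rule sum.reindex[symmetric, unfolded o_def]) (auto simp: inj_on_def R_def)
    also have "\<dots> < 1 / (1 - 1/2)" by (rule geometric_sum_less) (auto simp: R_def)
    finally have "(\<Sum>k\<in>R. (1/2::real) ^ (k - K0)) \<le> 2" by simp
    then show "16 / sqrt (expdeg n p K0) * (\<Sum>k\<in>R. (1/2) ^ (k - K0)) \<le> 16 / sqrt (expdeg n p K0) * 2"
      using mu2 by (intro mult_left_mono) auto
    have cR: "real (card R) \<le> L + 1"
    proof -
      have "card R \<le> Suc K1" unfolding R_def by simp
      then have "real (card R) \<le> real K1 + 1" by linarith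
      also have "real K1 \<le> L / 1000"
      proof -
        have "real K1 = of_int \<lfloor>L / 10^3\<rfloor>" unfolding K1_def using L1 by simp
        also have "\<dots> \<le> L / 1000" using of_int_floor_le[of "L/1000"] by simp
        finally show ?thesis .
      qed
      finally show ?thesis using L1 by linarith
    qed
    have pp: "2 * p \<le> 4 * L / real n" using hi n2 by (simp add: field_simps)
    have "real (card R) * (2 * p * L^2) \<le> (L + 1) * (2 * p * L^2)"
      using cR p0 by (intro mult_right_mono) auto
    also have "\<dots> \<le> (L + 1) * (4 * L / real n * L^2)"
      using pp L1 by (intro mult_left_mono mult_right_mono) auto
    finally show "real (card R) * (2 * p * L^2) \<le> (L + 1) * (4 * L / real n * L^2)" .
  qed
  also have "\<dots> = 32 / sqrt (expdeg n p K0) + (L + 1) * 4 * L^3 / real n"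
    by (simp add: field_simps power3_eq_cube power2_eq_square)
  finally show ?thesis unfolding sub .
qed

end

theorem lemma4p13:
  shows "\<exists>\<epsilon>0 > (0::real). \<forall>\<epsilon>. 0 < \<epsilon> \<and> \<epsilon> < \<epsilon>0 \<longrightarrow>
    (\<forall>(p :: nat \<Rightarrow> real) (K0 :: nat \<Rightarrow> nat).
      (\<forall>\<^sub>F n in sequentially.
          (1 - \<epsilon>) * ln (real n) \<le> real n * p n \<and>
          real n * p n \<le> ln (real n) + ln (ln (real n))) \<longrightarrow>
      (\<forall>n. K0 n \<in> {0, 1, 2}) \<longrightarrow>
      filterlim (\<lambda>n. expdeg n (p n) (K0 n)) at_top sequentially \<longrightarrow>
      ((\<lambda>n. measure_pmf.prob (Gnp n (p n))
          {G. \<forall>k \<in> {K0 n .. nat \<lfloor>ln (real n) / 10^3\<rfloor>}.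
                \<bar>real (num_deg n G k) - expdeg n (p n) k\<bar>
                  \<le> expdeg n (p n) k / ln (expdeg n (p n) k)})
        \<longlonglongrightarrow> 1))"
proof (intro exI[of _ "1/2"] conjI allI impI)
  fix \<epsilon> :: real and p :: "nat \<Rightarrow> real" and K0 :: "nat \<Rightarrow> nat"
  assume eps: "0 < \<epsilon> \<and> \<epsilon> < 1/2"
  assume hev: "\<forall>\<^sub>F n in sequentially.
          (1 - \<epsilon>) * ln (real n) \<le> real n * p n \<and>
          real n * p n \<le> ln (real n) + ln (ln (real n))"
  assume hlim: "filterlim (\<lambda>n. expdeg n (p n) (K0 n)) at_top sequentially"
  define S where "S = (\<lambda>n. {G. \<forall>k \<in> {K0 n .. nat \<lfloor>ln (real n) / 10^3\<rfloor>}.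
                \<bar>real (num_deg n G k) - expdeg n (p n) k\<bar>
                  \<le> expdeg n (p n) k / ln (expdeg n (p n) k)})"
  define B where "B = (\<lambda>n. 32 / sqrt (expdeg n (p n) (K0 n)) + (ln (real n) + 1) * 4 * ln (real n)^3 / real n)"
  have e1: "eventually (\<lambda>n::nat. 1 \<le> ln (real n)) sequentially" by real_asymp
  have e2: "eventually (\<lambda>n::nat. ln (real n) + ln (ln (real n)) \<le> real n / 2) sequentially" by real_asymp
  have e3: "eventually (\<lambda>n::nat. ln (ln (real n)) \<le> ln (real n)) sequentially" by real_asymp
  have e4: "eventually (\<lambda>n::nat. ln (real n) / 1000 + 1 \<le> real n / 2) sequentially" by real_asymp
  have e5: "eventually (\<lambda>n. 2 \<le> expdeg n (p n) (K0 n)) sequentially"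
    using hlim by (simp add: filterlim_at_top)
  have e6: "eventually (\<lambda>n::nat. 2 \<le> n) sequentially" by (rule eventually_ge_at_top)
  have evB: "eventually (\<lambda>n. measure_pmf.prob (Gnp n (p n)) (UNIV - S n) \<le> B n) sequentially"
    using hev e1 e2 e3 e4 e5 e6
  proof eventually_elim
    case (elim n)
    define L where "L = ln (real n)"
    have "good n (p n) L"
    proof
      show "2 \<le> n" "L = ln (real n)" "1 \<le> L" using elim L_def by auto
      have "ln (real n) / 2 \<le> (1 - \<epsilon>) * ln (real n)" using eps elim by (simp add: mult_right_mono)
      then show "L / 2 \<le> real n * p n" using elim unfolding L_def by linarith
      show "real n * p n \<le> 2 * L" using elim unfolding L_def by linarith
      have "real n * p n \<le> real n / 2" using elim by linarith
      then show "p n \<le> 1/2" using elim by (simp add: field_simps)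
      show "L / 1000 + 1 \<le> real n / 2" using elim L_def by simp
    qed
    then have "measure_pmf.prob (Gnp n (p n)) {G. \<not> (\<forall>k \<in> {K0 n .. nat \<lfloor>L / 10^3\<rfloor>}.
                \<bar>real (num_deg n G k) - expdeg n (p n) k\<bar> \<le> expdeg n (p n) k / ln (expdeg n (p n) k))}
     \<le> 32 / sqrt (expdeg n (p n) (K0 n)) + (L + 1) * 4 * L^3 / real n"
      by (rule good.fail_bound) (use elim in simp)
    moreover have "UNIV - S n = {G. \<not> (\<forall>k \<in> {K0 n .. nat \<lfloor>L / 10^3\<rfloor>}.
                \<bar>real (num_deg n G k) - expdeg n (p n) k\<bar> \<le> expdeg n (p n) k / ln (expdeg n (p n) k))}"
      unfolding S_def L_def by auto
    ultimately show ?case unfolding B_def L_def by simp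
  qed
  have B0: "B \<longlonglongrightarrow> 0"
  proof -
    have "filterlim (\<lambda>n. sqrt (expdeg n (p n) (K0 n))) at_top sequentially"
      by (rule filterlim_compose[OF sqrt_at_top hlim])
    then have a: "(\<lambda>n. 32 / sqrt (expdeg n (p n) (K0 n))) \<longlonglongrightarrow> 0"
      by (intro tendsto_divide_0[OF tendsto_const] filterlim_at_top_imp_at_infinity)
    have b: "(\<lambda>n::nat. (ln (real n) + 1) * 4 * ln (real n)^3 / real n) \<longlonglongrightarrow> 0" by real_asymp
    show ?thesis unfolding B_def using tendsto_add[OF a b] by simp
  qed
  have F0: "(\<lambda>n. measure_pmf.prob (Gnp n (p n)) (UNIV - S n)) \<longlonglongrightarrow> 0"
    by (rule tendsto_sandwich[OF _ evB tendsto_const B0]) simp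
  have "(\<lambda>n. 1 - measure_pmf.prob (Gnp n (p n)) (UNIV - S n)) \<longlonglongrightarrow> 1 - 0"
    by (intro tendsto_diff tendsto_const F0)
  moreover have "1 - measure_pmf.prob (Gnp n (p n)) (UNIV - S n) = measure_pmf.prob (Gnp n (p n)) (S n)" for n
    using measure_pmf.prob_compl[of "S n" "Gnp n (p n)"] by simp
  ultimately show "(\<lambda>n. measure_pmf.prob (Gnp n (p n)) (S n)) \<longlonglongrightarrow> 1" by simp
qed simp

end
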